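(* Let $a>0$ and let $\mathcal{G}$ be the real Lie algebra with basis $X_1,X_2,X_3$ and brackets $[X_1,X_2]=-aX_2+X_3$, $[X_2,X_3]=0$, $[X_3,X_1]=X_2+aX_3$ (Bianchi type $VII_a$). Every real Manin triple $(\mathcal{D},\mathcal{G}',\tilde{\mathcal{G}}')$ with $\mathcal{G}'\cong\mathcal{G}$ is isomorphic to exactly one Manin triple $(\mathcal{D},\mathcal{G},\tilde{\mathcal{G}})$ in which $\tilde{\mathcal{G}}$, in the basis $\tilde X^1,\tilde X^2,\tilde X^3$ dual to $X_1,X_2,X_3$, has one of the following bracket structures: (a) (Bianchi $I$) all brackets zero; (b) (Bianchi $II$) (i) $[\tilde X^1,\tilde X^2]=0$, $[\tilde X^2,\tilde X^3]=\tilde X^1$, $[\tilde X^3,\tilde X^1]=0$; (ii) $[\tilde X^1,\tilde X^2]=0$, $[\tilde X^2,\tilde X^3]=-\tilde X^1$, $[\tilde X^3,\tilde X^1]=0$; (c) (Bianchi $VII_{1/a}$) $[\tilde X^1,\tilde X^2]=b(-\tfrac1a\tilde X^2+\tilde X^3)$, $[\tilde X^2,\tilde X^3]=0$, $[\tilde X^3,\tilde X^1]=b(\tilde X^2+\tfrac1a\tilde X^3)$, with $b\in\mathbb{R}\setminus\{0\}$.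
   Context: A real Manin triple $(\mathcal{D},\mathcal{G},\tilde{\mathcal{G}})$ consists of a real Lie algebra $\mathcal{D}$ with a symmetric, ad-invariant, nondegenerate bilinear form $\langle\cdot,\cdot\rangle$, and two maximally isotropic Lie subalgebras $\mathcal{G},\tilde{\mathcal{G}}$ with $\mathcal{D}=\mathcal{G}\oplus\tilde{\mathcal{G}}$ as vector spaces; here $\dim\mathcal{D}=6$, $\dim\mathcal{G}=\dim\tilde{\mathcal{G}}=3$. Bases $X_i$ of $\mathcal{G}$ and $\tilde X^i$ of $\tilde{\mathcal{G}}$ are dual if $\langle X_i,X_j\rangle=0$, $\langle X_i,\tilde X^j\rangle=\delta_i^j$, $\langle\tilde X^i,\tilde X^j\rangle=0$. If $[X_i,X_j]=f_{ij}{}^kX_k$ and $[\tilde X^i,\tilde X^j]=\tilde f^{ij}{}_k\tilde X^k$, ad-invariance forces $[X_i,\tilde X^j]=f_{ki}{}^j\tilde X^k+\tilde f^{jk}{}_iX_k$, so the triple is determined by the brackets of $\mathcal{G}$ and $\tilde{\mathcal{G}}$ in dual bases. Two Manin triples are isomorphic if there is a Lie algebra isomorphism of the doubles preserving the bilinear forms and mapping first subalgebra to first subalgebra and second to second; equivalently, they are related by a change of basis $X_i'=X_kA^k{}_i$, $\tilde X'^j=(A^{-1})^j{}_k\tilde X^k$. Different values of the parameter $b$ give non-isomorphic triples. *)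

theory Defs
  imports Complex_Main
begin

text \<open>Basis indices are natural numbers; the Lie algebra
  G uses indices 0,1,2 (for X_1,X_2,X_3). Structure constants are functions
  c :: nat => nat => nat => real with [e_i,e_j] = sum_k c i j k e_k.
  Only indices below the dimension are meaningful.\<close>

type_synonym sc = "nat \<Rightarrow> nat \<Rightarrow> nat \<Rightarrow> real"

definition lie_sc :: "nat \<Rightarrow> sc \<Rightarrow> bool" where
  "lie_sc n c \<longleftrightarrow>
     (\<forall>i<n. \<forall>j<n. \<forall>k<n. c i j k = - c j i k) \<and>
     (\<forall>i<n. \<forall>j<n. \<forall>k<n. \<forall>m<n.
        (\<Sum>l<n. c i j l * c l k m + c j k l * c l i m + c k i l * c l j m) = 0)"

text \<open>Structure constants of the 6-dimensional double D = G + G~ in the basis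
  e_0,e_1,e_2 = X_1,X_2,X_3 and e_3,e_4,e_5 = X~^1,X~^2,X~^3 (dual basis w.r.t.
  the canonical form), with [X_i,X_j] = f_ij^k X_k, [X~^i,X~^j] = ft^ij_k X~^k and
  [X_i,X~^j] = f_ki^j X~^k + ft^jk_i X_k.  Here f i j k = f_ij^k and
  ft i j k = ft^ij_k.\<close>

definition double_sc :: "sc \<Rightarrow> sc \<Rightarrow> sc" where
  "double_sc f ft i j m =
     (if i < 3 \<and> j < 3 then (if m < 3 then f i j m else 0)
      else if i < 3 \<and> 3 \<le> j then
        (if m < 3 then ft (j - 3) m i else f (m - 3) i (j - 3))
      else if 3 \<le> i \<and> j < 3 then
        (if m < 3 then - ft (i - 3) m j else - f (m - 3) j (i - 3))
      else (if m < 3 then 0 else ft (i - 3) (j - 3) (m - 3)))"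

text \<open>(f, ft) defines a real Manin triple (D, G, G~) in dual bases iff the double
  bracket is a Lie bracket (the canonical pairing is then automatically
  symmetric, ad-invariant, nondegenerate, and G, G~ maximally isotropic).\<close>

definition manin :: "sc \<Rightarrow> sc \<Rightarrow> bool" where
  "manin f ft \<longleftrightarrow> lie_sc 3 f \<and> lie_sc 3 ft \<and> lie_sc 6 (double_sc f ft)"

definition inv3 :: "(nat \<Rightarrow> nat \<Rightarrow> real) \<Rightarrow> (nat \<Rightarrow> nat \<Rightarrow> real) \<Rightarrow> bool" where
  "inv3 A B \<longleftrightarrow>
     (\<forall>i<3. \<forall>j<3. (\<Sum>k<3. A i k * B k j) = (if i = j then 1 else 0)) \<and>
     (\<forall>i<3. \<forall>j<3. (\<Sum>k<3. B i k * A k j) = (if i = j then 1 else 0))"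

text \<open>Change of basis X'_i = X_k A^k_i (A k i = A^k_i), B = A^{-1}.\<close>

definition trans_G :: "(nat \<Rightarrow> nat \<Rightarrow> real) \<Rightarrow> (nat \<Rightarrow> nat \<Rightarrow> real) \<Rightarrow> sc \<Rightarrow> sc" where
  "trans_G A B f i j n = (\<Sum>k<3. \<Sum>l<3. \<Sum>m<3. A k i * A l j * f k l m * B n m)"

text \<open>Dual change of basis X~'^j = (A^{-1})^j_k X~^k.\<close>

definition trans_Gt :: "(nat \<Rightarrow> nat \<Rightarrow> real) \<Rightarrow> (nat \<Rightarrow> nat \<Rightarrow> real) \<Rightarrow> sc \<Rightarrow> sc" where
  "trans_Gt A B ft i j n = (\<Sum>k<3. \<Sum>l<3. \<Sum>m<3. B i k * B j l * ft k l m * A m n)"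

definition lie_iso3 :: "sc \<Rightarrow> sc \<Rightarrow> bool" where
  "lie_iso3 f g \<longleftrightarrow> (\<exists>A B. inv3 A B \<and>
      (\<forall>i<3. \<forall>j<3. \<forall>n<3. g i j n = trans_G A B f i j n))"

definition manin_iso :: "sc \<Rightarrow> sc \<Rightarrow> sc \<Rightarrow> sc \<Rightarrow> bool" where
  "manin_iso f ft g gt \<longleftrightarrow> (\<exists>A B. inv3 A B \<and>
      (\<forall>i<3. \<forall>j<3. \<forall>n<3. g i j n = trans_G A B f i j n \<and>
                           gt i j n = trans_Gt A B ft i j n))"

definition vec3 :: "real \<Rightarrow> real \<Rightarrow> real \<Rightarrow> nat \<Rightarrow> real" where
  "vec3 x y z k = (if k = 0 then x else if k = 1 then y else if k = 2 then z else 0)"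

definition sc_of :: "(nat \<Rightarrow> real) \<Rightarrow> (nat \<Rightarrow> real) \<Rightarrow> (nat \<Rightarrow> real) \<Rightarrow> sc" where
  "sc_of c01 c12 c20 i j k =
     (if i = 0 \<and> j = 1 then c01 k else if i = 1 \<and> j = 0 then - c01 k
      else if i = 1 \<and> j = 2 then c12 k else if i = 2 \<and> j = 1 then - c12 k
      else if i = 2 \<and> j = 0 then c20 k else if i = 0 \<and> j = 2 then - c20 k
      else 0)"

definition bianchi7 :: "real \<Rightarrow> sc" where
  "bianchi7 a = sc_of (vec3 0 (-a) 1) (vec3 0 0 0) (vec3 0 1 a)"

definition canonical_dual :: "real \<Rightarrow> sc \<Rightarrow> bool" where
  "canonical_dual a ft \<longleftrightarrow>
     ft = sc_of (vec3 0 0 0) (vec3 0 0 0) (vec3 0 0 0) \<or>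
     ft = sc_of (vec3 0 0 0) (vec3 1 0 0) (vec3 0 0 0) \<or>
     ft = sc_of (vec3 0 0 0) (vec3 (-1) 0 0) (vec3 0 0 0) \<or>
     (\<exists>b. b \<noteq> 0 \<and>
        ft = sc_of (vec3 0 (-(b / a)) b) (vec3 0 0 0) (vec3 0 b (b / a)))"

end

theory Submission
  imports Defs
begin


lemma sw_front: "(\<Sum>k\<in>A. \<Sum>l\<in>B. \<Sum>p\<in>C. \<Sum>a\<in>D. (g k l p a::real)) = (\<Sum>a\<in>D. \<Sum>k\<in>A. \<Sum>l\<in>B. \<Sum>p\<in>C. g k l p a)"
proof -
  have "(\<Sum>k\<in>A. \<Sum>l\<in>B. \<Sum>p\<in>C. \<Sum>a\<in>D. g k l p a) = (\<Sum>k\<in>A. \<Sum>l\<in>B. \<Sum>a\<in>D. \<Sum>p\<in>C. g k l p a)"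
    by (rule sum.cong[OF refl], rule sum.cong[OF refl], rule sum.swap)
  also have "\<dots> = (\<Sum>k\<in>A. \<Sum>a\<in>D. \<Sum>l\<in>B. \<Sum>p\<in>C. g k l p a)"
    by (rule sum.cong[OF refl], rule sum.swap)
  also have "\<dots> = (\<Sum>a\<in>D. \<Sum>k\<in>A. \<Sum>l\<in>B. \<Sum>p\<in>C. g k l p a)"
    by (rule sum.swap)
  finally show ?thesis .
qed

lemma sw6: "(\<Sum>k\<in>A. \<Sum>l\<in>B. \<Sum>p\<in>C. \<Sum>a\<in>D. \<Sum>b\<in>E. \<Sum>d\<in>F. (g k l p a b d::real)) = 
       (\<Sum>a\<in>D. \<Sum>b\<in>E. \<Sum>d\<in>F. \<Sum>k\<in>A. \<Sum>l\<in>B. \<Sum>p\<in>C. g k l p a b d)"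
proof -
  have "(\<Sum>k\<in>A. \<Sum>l\<in>B. \<Sum>p\<in>C. \<Sum>a\<in>D. \<Sum>b\<in>E. \<Sum>d\<in>F. g k l p a b d) = 
       (\<Sum>a\<in>D. \<Sum>k\<in>A. \<Sum>l\<in>B. \<Sum>p\<in>C. \<Sum>b\<in>E. \<Sum>d\<in>F. g k l p a b d)"
    by (rule sw_front)
  also have "\<dots> = (\<Sum>a\<in>D. \<Sum>b\<in>E. \<Sum>k\<in>A. \<Sum>l\<in>B. \<Sum>p\<in>C. \<Sum>d\<in>F. g k l p a b d)"
    by (rule sum.cong[OF refl], rule sw_front)
  also have "\<dots> = (\<Sum>a\<in>D. \<Sum>b\<in>E. \<Sum>d\<in>F. \<Sum>k\<in>A. \<Sum>l\<in>B. \<Sum>p\<in>C. g k l p a b d)"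
    by (rule sum.cong[OF refl], rule sum.cong[OF refl], rule sw_front)
  finally show ?thesis .
qed

definition T :: "nat \<Rightarrow> (nat\<Rightarrow>nat\<Rightarrow>real) \<Rightarrow> (nat\<Rightarrow>nat\<Rightarrow>real) \<Rightarrow> sc \<Rightarrow> sc" where
 "T n P Q c i j m = (\<Sum>k<n. \<Sum>l<n. \<Sum>p<n. P k i * P l j * c k l p * Q m p)"

definition mm :: "nat \<Rightarrow> (nat\<Rightarrow>nat\<Rightarrow>real) \<Rightarrow> (nat\<Rightarrow>nat\<Rightarrow>real) \<Rightarrow> (nat\<Rightarrow>nat\<Rightarrow>real)" where
 "mm n P Q i j = (\<Sum>k<n. P i k * Q k j)"

lemma T_comp:
  "T n P Q (T n P' Q' c) i j m = T n (mm n P' P) (mm n Q Q') c i j m"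
proof -
  have "T n P Q (T n P' Q' c) i j m =
    (\<Sum>k<n. \<Sum>l<n. \<Sum>p<n. \<Sum>a<n. \<Sum>b<n. \<Sum>d<n. P k i * P l j * (P' a k * P' b l * c a b d * Q' p d) * Q m p)"
    by (simp add: T_def sum_distrib_left sum_distrib_right)
  also have "\<dots> = (\<Sum>a<n. \<Sum>b<n. \<Sum>d<n. \<Sum>k<n. \<Sum>l<n. \<Sum>p<n. P k i * P l j * (P' a k * P' b l * c a b d * Q' p d) * Q m p)"
    by (rule sw6)
  also have "\<dots> = (\<Sum>a<n. \<Sum>b<n. \<Sum>d<n. \<Sum>l<n. \<Sum>k<n. \<Sum>p<n. P k i * P l j * (P' a k * P' b l * c a b d * Q' p d) * Q m p)"
    by (rule sum.cong[OF refl], rule sum.cong[OF refl], rule sum.cong[OF refl], rule sum.swap)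
  also have "\<dots> = T n (mm n P' P) (mm n Q Q') c i j m"
    by (simp add: T_def mm_def sum_distrib_left sum_distrib_right mult_ac)
  finally show ?thesis .
qed

lemma sw3: "(\<Sum>k\<in>A. \<Sum>l\<in>B. \<Sum>p\<in>C. (g k l p::real)) = (\<Sum>p\<in>C. \<Sum>k\<in>A. \<Sum>l\<in>B. g k l p)"
proof -
  have "(\<Sum>k\<in>A. \<Sum>l\<in>B. \<Sum>p\<in>C. g k l p) = (\<Sum>k\<in>A. \<Sum>p\<in>C. \<Sum>l\<in>B. g k l p)"
    by (rule sum.cong[OF refl], rule sum.swap)
  also have "\<dots> = (\<Sum>p\<in>C. \<Sum>k\<in>A. \<Sum>l\<in>B. g k l p)" by (rule sum.swap)
  finally show ?thesis .
qed

definition beta :: "nat \<Rightarrow> (nat\<Rightarrow>nat\<Rightarrow>real) \<Rightarrow> sc \<Rightarrow> nat \<Rightarrow> nat \<Rightarrow> nat \<Rightarrow> real" where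
  "beta n P c i j a = (\<Sum>k<n. \<Sum>l<n. P k i * P l j * c k l a)"

lemma T_beta: "T n P Q c i j m = (\<Sum>p<n. beta n P c i j p * Q m p)"
proof -
  have "T n P Q c i j m = (\<Sum>p<n. \<Sum>k<n. \<Sum>l<n. P k i * P l j * c k l p * Q m p)"
    unfolding T_def by (rule sw3)
  then show ?thesis by (simp add: beta_def sum_distrib_right)
qed

lemma claimA:
  assumes inv: "\<forall>a<n. \<forall>p<n. (\<Sum>l<n. P a l * Q l p) = (if a = p then 1 else 0)"
    and "a < n"
  shows "(\<Sum>l<n. T n P Q c i j l * P a l) = beta n P c i j a"
proof -
  have "(\<Sum>l<n. T n P Q c i j l * P a l) = (\<Sum>l<n. \<Sum>p<n. beta n P c i j p * (P a l * Q l p))"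
    by (simp add: T_beta sum_distrib_right sum_distrib_left mult_ac)
  also have "\<dots> = (\<Sum>p<n. \<Sum>l<n. beta n P c i j p * (P a l * Q l p))" by (rule sum.swap)
  also have "\<dots> = (\<Sum>p<n. beta n P c i j p * (\<Sum>l<n. P a l * Q l p))" by (simp add: sum_distrib_left)
  also have "\<dots> = (\<Sum>p<n. beta n P c i j p * (if a = p then 1 else 0))"
    using inv \<open>a<n\<close> by (intro sum.cong) auto
  also have "\<dots> = beta n P c i j a" using \<open>a<n\<close> by (simp add: if_distrib cong: if_cong)
  finally show ?thesis .
qed


lemma claimB:
  assumes inv: "\<forall>a<n. \<forall>p<n. (\<Sum>l<n. P a l * Q l p) = (if a = p then 1 else 0)"
  shows "(\<Sum>l<n. T n P Q c i j l * T n P Q c l k m) =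
     (\<Sum>d<n. Q m d * (\<Sum>a<n. \<Sum>b<n. beta n P c i j a * P b k * c a b d))"
proof -
  have "(\<Sum>l<n. T n P Q c i j l * T n P Q c l k m) =
     (\<Sum>l<n. \<Sum>a<n. \<Sum>b<n. \<Sum>d<n. T n P Q c i j l * P a l * (P b k * c a b d * Q m d))"
  proof -
    have e: "T n P Q c l k m = (\<Sum>a<n. \<Sum>b<n. \<Sum>d<n. P a l * P b k * c a b d * Q m d)" for l
      by (simp add: T_def)
    show ?thesis by (simp only: e sum_distrib_left) (simp add: mult_ac)
  qed
  also have "\<dots> = (\<Sum>a<n. \<Sum>b<n. \<Sum>d<n. \<Sum>l<n. T n P Q c i j l * P a l * (P b k * c a b d * Q m d))"
    by (rule sw_front[symmetric])
  also have "\<dots> = (\<Sum>a<n. \<Sum>b<n. \<Sum>d<n. (\<Sum>l<n. T n P Q c i j l * P a l) * (P b k * c a b d * Q m d))"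
    by (simp add: sum_distrib_right)
  also have "\<dots> = (\<Sum>a<n. \<Sum>b<n. \<Sum>d<n. beta n P c i j a * (P b k * c a b d * Q m d))"
    using claimA[OF inv] by (intro sum.cong refl) auto
  also have "\<dots> = (\<Sum>d<n. \<Sum>a<n. \<Sum>b<n. beta n P c i j a * (P b k * c a b d * Q m d))"
    by (rule sw3)
  also have "\<dots> = (\<Sum>d<n. Q m d * (\<Sum>a<n. \<Sum>b<n. beta n P c i j a * P b k * c a b d))"
    by (simp add: sum_distrib_left mult_ac)
  finally show ?thesis .
qed

definition Kf :: "nat \<Rightarrow> (nat\<Rightarrow>nat\<Rightarrow>real) \<Rightarrow> sc \<Rightarrow> nat \<Rightarrow> nat \<Rightarrow> nat \<Rightarrow> nat \<Rightarrow> real" where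
  "Kf n P c i j k d = (\<Sum>u<n. \<Sum>v<n. \<Sum>w<n. P u i * P v j * P w k * (\<Sum>a<n. c u v a * c a w d))"

lemma J_Kf: "(\<Sum>a<n. \<Sum>b<n. beta n P c i j a * P b k * c a b d) = Kf n P c i j k d"
proof -
  have "(\<Sum>a<n. \<Sum>b<n. beta n P c i j a * P b k * c a b d) =
     (\<Sum>a<n. \<Sum>b<n. \<Sum>u<n. \<Sum>v<n. P u i * P v j * P b k * (c u v a * c a b d))"
    by (simp add: beta_def sum_distrib_left sum_distrib_right mult_ac)
  also have "\<dots> = (\<Sum>a<n. \<Sum>u<n. \<Sum>v<n. \<Sum>b<n. P u i * P v j * P b k * (c u v a * c a b d))"
    by (rule sum.cong[OF refl], rule sw3[symmetric])
  also have "\<dots> = (\<Sum>u<n. \<Sum>v<n. \<Sum>b<n. \<Sum>a<n. P u i * P v j * P b k * (c u v a * c a b d))"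
    by (rule sw_front[symmetric])
  also have "\<dots> = Kf n P c i j k d"
    by (simp add: Kf_def sum_distrib_left)
  finally show ?thesis .
qed

lemma Kf_cyc:
  assumes lie: "lie_sc n c" and "d < n"
  shows "Kf n P c i j k d + Kf n P c j k i d + Kf n P c k i j d = 0"
proof -
  define S where "S u v w = (\<Sum>a<n. c u v a * c a w d)" for u v w
  have 1: "Kf n P c i j k d = (\<Sum>u<n. \<Sum>v<n. \<Sum>w<n. P u i * P v j * P w k * S u v w)"
    by (simp add: Kf_def S_def)
  have "Kf n P c j k i d = (\<Sum>u<n. \<Sum>v<n. \<Sum>w<n. P u j * P v k * P w i * S u v w)"
    by (simp add: Kf_def S_def)
  also have "\<dots> = (\<Sum>w<n. \<Sum>u<n. \<Sum>v<n. P u j * P v k * P w i * S u v w)"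
    by (rule sw3)
  finally have 2: "Kf n P c j k i d = (\<Sum>u<n. \<Sum>v<n. \<Sum>w<n. P u i * P v j * P w k * S v w u)"
    by (simp add: mult_ac)
  have "Kf n P c k i j d = (\<Sum>u<n. \<Sum>v<n. \<Sum>w<n. P u k * P v i * P w j * S u v w)"
    by (simp add: Kf_def S_def)
  also have "\<dots> = (\<Sum>v<n. \<Sum>w<n. \<Sum>u<n. P u k * P v i * P w j * S u v w)"
    by (rule sw3[symmetric])
  finally have 3: "Kf n P c k i j d = (\<Sum>u<n. \<Sum>v<n. \<Sum>w<n. P u i * P v j * P w k * S w u v)"
    by (simp add: mult_ac)
  have z: "S u v w + S v w u + S w u v = 0" if "u<n" "v<n" "w<n" for u v w
  proof -
    have "S u v w + S v w u + S w u v = (\<Sum>a<n. c u v a * c a w d + c v w a * c a u d + c w u a * c a v d)"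
      by (simp add: S_def sum.distrib)
    also have "\<dots> = 0" using lie that \<open>d<n\<close> unfolding lie_sc_def by blast
    finally show ?thesis .
  qed
  have "Kf n P c i j k d + Kf n P c j k i d + Kf n P c k i j d =
    (\<Sum>u<n. \<Sum>v<n. \<Sum>w<n. P u i * P v j * P w k * (S u v w + S v w u + S w u v))"
    unfolding 1 2 3 by (simp add: sum.distrib[symmetric] distrib_left)
  also have "\<dots> = 0" using z by (intro sum.neutral ballI) auto
  finally show ?thesis .
qed

lemma lie_T:
  assumes lie: "lie_sc n c"
    and inv: "\<forall>a<n. \<forall>p<n. (\<Sum>l<n. P a l * Q l p) = (if a = p then 1 else 0)"
  shows "lie_sc n (T n P Q c)"
  unfolding lie_sc_def
proof (intro conjI allI impI)
  fix i j k assume "i<n" "j<n" "k<n"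
  have "T n P Q c j i k = (\<Sum>k'<n. \<Sum>l<n. \<Sum>p<n. P l j * P k' i * c l k' p * Q k p)"
    unfolding T_def by (rule sum.swap)
  also have "\<dots> = (\<Sum>k'<n. \<Sum>l<n. \<Sum>p<n. - (P k' i * P l j * c k' l p * Q k p))"
  proof (intro sum.cong refl)
    fix k' l p assume "k' \<in> {..<n}" "l \<in> {..<n}" "p \<in> {..<n}"
    then have "c l k' p = - c k' l p" using lie unfolding lie_sc_def by (meson lessThan_iff)
    then show "P l j * P k' i * c l k' p * Q k p = - (P k' i * P l j * c k' l p * Q k p)" by simp
  qed
  also have "\<dots> = - T n P Q c i j k" by (simp add: T_def sum_negf)
  finally show "T n P Q c i j k = - T n P Q c j i k" by simp
next
  fix i j k m assume "i<n" "j<n" "k<n" "m<n"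
  have "(\<Sum>l<n. T n P Q c i j l * T n P Q c l k m + T n P Q c j k l * T n P Q c l i m + T n P Q c k i l * T n P Q c l j m)
    = (\<Sum>d<n. Q m d * (Kf n P c i j k d + Kf n P c j k i d + Kf n P c k i j d))"
    by (simp add: sum.distrib claimB[OF inv] J_Kf distrib_left)
  also have "\<dots> = 0" using Kf_cyc[OF lie] by simp
  finally show "(\<Sum>l<n. T n P Q c i j l * T n P Q c l k m + T n P Q c j k l * T n P Q c l i m + T n P Q c k i l * T n P Q c l j m) = 0" .
qed



definition Pb :: "(nat\<Rightarrow>nat\<Rightarrow>real) \<Rightarrow> (nat\<Rightarrow>nat\<Rightarrow>real) \<Rightarrow> nat \<Rightarrow> nat \<Rightarrow> real" where
  "Pb A B k i = (if k < 3 \<and> i < 3 then A k i else if 3 \<le> k \<and> k < 6 \<and> 3 \<le> i \<and> i < 6 then B (i-3) (k-3) else 0)"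
definition Qb :: "(nat\<Rightarrow>nat\<Rightarrow>real) \<Rightarrow> (nat\<Rightarrow>nat\<Rightarrow>real) \<Rightarrow> nat \<Rightarrow> nat \<Rightarrow> real" where
  "Qb A B m p = (if m < 3 \<and> p < 3 then B m p else if 3 \<le> m \<and> m < 6 \<and> 3 \<le> p \<and> p < 6 then A (p-3) (m-3) else 0)"

lemma sum6: "(\<Sum>k<(6::nat). g k) = (g 0 + g 1 + g 2 + g 3 + g 4 + (g 5::real))"
  by (simp add: eval_nat_numeral)
lemma sum3: "(\<Sum>k<(3::nat). g k) = (g 0 + g 1 + (g 2::real))"
  by (simp add: eval_nat_numeral)

lemma L2case:
  assumes "i < 3" "j < 3" "m < 3"
  shows "double_sc (trans_G A B f) (trans_Gt A B ft) i j m = T 6 (Pb A B) (Qb A B) (double_sc f ft) i j m"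
  using assms
  by (simp add: double_sc_def trans_G_def trans_Gt_def T_def Pb_def Qb_def sum6 sum3 algebra_simps)


lemma split6: "(i::nat) < 6 \<Longrightarrow> i < 3 \<or> (\<exists>i'. i = i' + 3 \<and> i' < 3)"
  by presburger

lemma L2:
  assumes "i < 6" "j < 6" "m < 6"
  shows "double_sc (trans_G A B f) (trans_Gt A B ft) i j m = T 6 (Pb A B) (Qb A B) (double_sc f ft) i j m"
  using split6[OF assms(1)] split6[OF assms(2)] split6[OF assms(3)]
  by (elim disjE exE conjE; simp add: double_sc_def trans_G_def trans_Gt_def T_def Pb_def Qb_def sum6 sum3 algebra_simps)



lemma mm_fun: "mm n X Y = (\<lambda>i j. \<Sum>k<n. X i k * Y k j)"
  by (simp add: fun_eq_iff mm_def)

lemma mm_assoc: "mm n (mm n X Y) Z i j = mm n X (mm n Y Z) i j"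
proof -
  have "mm n (mm n X Y) Z i j = (\<Sum>k<n. \<Sum>l<n. X i l * Y l k * Z k j)"
    by (simp add: mm_def sum_distrib_right)
  also have "\<dots> = (\<Sum>l<n. \<Sum>k<n. X i l * Y l k * Z k j)" by (rule sum.swap)
  also have "\<dots> = mm n X (mm n Y Z) i j" by (simp add: mm_def sum_distrib_left mult_ac)
  finally show ?thesis .
qed

lemma mm_idL:
  assumes "\<forall>i<n. \<forall>k<n. X i k = (if i = k then 1 else 0)" "i < n"
  shows "mm n X Y i j = Y i j"
proof -
  have "mm n X Y i j = (\<Sum>k<n. (if i = k then Y k j else 0))"
    unfolding mm_def using assms by (intro sum.cong) auto
  also have "\<dots> = Y i j" using assms(2) by simp
  finally show ?thesis .
qed

lemma mm_congR:
  assumes "\<forall>k<n. Y k j = Y' k j"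
  shows "mm n X Y i j = mm n X Y' i j"
  unfolding mm_def using assms by (intro sum.cong) auto

lemma mm_congL:
  assumes "\<forall>k<n. X i k = X' i k"
  shows "mm n X Y i j = mm n X' Y i j"
  unfolding mm_def using assms by (intro sum.cong) auto

lemma inv3_mm: "inv3 A B \<longleftrightarrow> (\<forall>i<3. \<forall>j<3. mm 3 A B i j = (if i = j then 1 else 0)) \<and> (\<forall>i<3. \<forall>j<3. mm 3 B A i j = (if i = j then 1 else 0))"
  by (simp add: inv3_def mm_def)

lemma inv3_sym: "inv3 A B \<Longrightarrow> inv3 B A"
  by (simp add: inv3_def)

lemma inv3_prod:
  assumes "inv3 A B" "inv3 A' B'"
  shows "inv3 (mm 3 A A') (mm 3 B' B)"
proof -
  have h: "mm 3 (mm 3 X Y) (mm 3 Y' X') i j = (if i = j then 1 else 0)"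
    if "\<forall>i<3. \<forall>j<3. mm 3 X X' i j = (if i = j then 1 else 0)"
       "\<forall>i<3. \<forall>j<3. mm 3 Y Y' i j = (if i = j then 1 else 0)" "i<3" "j<3" for X Y X' Y' i j
  proof -
    have "mm 3 (mm 3 X Y) (mm 3 Y' X') i j = mm 3 X (mm 3 Y (mm 3 Y' X')) i j" by (rule mm_assoc)
    also have "\<dots> = mm 3 X (mm 3 (mm 3 Y Y') X') i j"
      by (rule mm_congR) (simp add: mm_assoc)
    also have "\<dots> = mm 3 X X' i j"
      by (rule mm_congR) (use that in \<open>simp add: mm_idL\<close>)
    also have "\<dots> = (if i = j then 1 else 0)" using that by simp
    finally show ?thesis .
  qed
  show ?thesis using assms unfolding inv3_mm
    apply (intro conjI allI impI)
     apply (rule h[of A B A' B']; simp)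
    apply (rule h[of B' A' B A]; simp)
    done
qed

lemma T3_id:
  assumes "\<forall>k<3. \<forall>i<3. P k i = (if k = i then 1 else 0)" "\<forall>k<3. \<forall>i<3. Q k i = (if k = i then 1 else 0)"
    "i<3" "j<3" "m<3"
  shows "T 3 P Q c i j m = c i j m"
proof -
  have P: "P k i = (if k = i then 1 else 0)" "Q k i = (if k = i then 1 else 0)" if "k<3" "i<3" for k i
    using assms that by auto
  have c3: "x < 3 \<Longrightarrow> x = 0 \<or> x = 1 \<or> x = (2::nat)" for x by auto
  show ?thesis using c3[OF assms(3)] c3[OF assms(4)] c3[OF assms(5)]
    by (elim disjE; simp add: T_def sum3 P)
qed

lemma trans_G_T: "trans_G A B f = T 3 A B f"
  by (simp add: fun_eq_iff trans_G_def T_def)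
lemma trans_Gt_T: "trans_Gt A B ft = T 3 (\<lambda>k i. B i k) (\<lambda>n m. A m n) ft"
  by (simp add: fun_eq_iff trans_Gt_def T_def mult_ac)

lemma T_cong:
  assumes "\<forall>i<n. \<forall>j<n. \<forall>m<n. c i j m = c' i j m"
  shows "T n P Q c i j m = T n P Q c' i j m"
  unfolding T_def using assms by (intro sum.cong refl) auto

lemma T_undo:
  assumes "inv3 A B" "i<3" "j<3" "m<3"
  shows "T 3 B A (T 3 A B c) i j m = c i j m"
proof -
  have "T 3 B A (T 3 A B c) i j m = T 3 (mm 3 A B) (mm 3 A B) c i j m" by (rule T_comp)
  also have "\<dots> = c i j m" using assms by (intro T3_id) (auto simp: inv3_mm)
  finally show ?thesis .
qed

lemma T_undo':
  assumes "inv3 A B" "i<3" "j<3" "m<3"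
  shows "T 3 (\<lambda>k i. A i k) (\<lambda>n m. B m n) (T 3 (\<lambda>k i. B i k) (\<lambda>n m. A m n) c) i j m = c i j m"
proof -
  have "T 3 (\<lambda>k i. A i k) (\<lambda>n m. B m n) (T 3 (\<lambda>k i. B i k) (\<lambda>n m. A m n) c) i j m =
    T 3 (mm 3 (\<lambda>k i. B i k) (\<lambda>k i. A i k)) (mm 3 (\<lambda>n m. B m n) (\<lambda>n m. A m n)) c i j m" by (rule T_comp)
  also have "\<dots> = c i j m" using assms
    by (intro T3_id) (auto simp: inv3_def mm_def mult.commute)
  finally show ?thesis .
qed

definition miso where
  "miso A B f ft g gt \<longleftrightarrow> inv3 A B \<and> (\<forall>i<3. \<forall>j<3. \<forall>n<3. g i j n = trans_G A B f i j n \<and>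
                           gt i j n = trans_Gt A B ft i j n)"

lemma manin_iso_miso: "manin_iso f ft g gt \<longleftrightarrow> (\<exists>A B. miso A B f ft g gt)"
  by (simp add: manin_iso_def miso_def)

lemma miso_sym:
  assumes "miso A B f ft g gt"
  shows "miso B A g gt f ft"
proof -
  have inv: "inv3 A B" and e: "\<forall>i<3. \<forall>j<3. \<forall>n<3. g i j n = T 3 A B f i j n \<and>
       gt i j n = T 3 (\<lambda>k i. B i k) (\<lambda>n m. A m n) ft i j n"
    using assms by (auto simp: miso_def trans_G_T trans_Gt_T)
  have "trans_G B A g i j n = f i j n" if "i<3" "j<3" "n<3" for i j n
  proof -
    have "trans_G B A g i j n = T 3 B A (T 3 A B f) i j n"
      unfolding trans_G_T using e by (intro T_cong) auto
    also have "\<dots> = f i j n" using T_undo[OF inv] that by simp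
    finally show ?thesis .
  qed
  moreover have "trans_Gt B A gt i j n = ft i j n" if "i<3" "j<3" "n<3" for i j n
  proof -
    have "trans_Gt B A gt i j n = T 3 (\<lambda>k i. A i k) (\<lambda>n m. B m n) (T 3 (\<lambda>k i. B i k) (\<lambda>n m. A m n) ft) i j n"
      unfolding trans_Gt_T using e by (intro T_cong) auto
    also have "\<dots> = ft i j n" using T_undo'[OF inv] that by simp
    finally show ?thesis .
  qed
  ultimately show ?thesis using inv3_sym[OF inv] by (simp add: miso_def)
qed

lemma miso_trans:
  assumes "miso A B f ft g gt" "miso A' B' g gt h ht"
  shows "miso (mm 3 A A') (mm 3 B' B) f ft h ht"
proof -
  have inv: "inv3 A B" "inv3 A' B'" and e: "\<forall>i<3. \<forall>j<3. \<forall>n<3. g i j n = T 3 A B f i j n \<and>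
       gt i j n = T 3 (\<lambda>k i. B i k) (\<lambda>n m. A m n) ft i j n"
    and e': "\<forall>i<3. \<forall>j<3. \<forall>n<3. h i j n = T 3 A' B' g i j n \<and>
       ht i j n = T 3 (\<lambda>k i. B' i k) (\<lambda>n m. A' m n) gt i j n"
    using assms by (auto simp: miso_def trans_G_T trans_Gt_T)
  have "h i j n = trans_G (mm 3 A A') (mm 3 B' B) f i j n" if "i<3" "j<3" "n<3" for i j n
  proof -
    have "h i j n = T 3 A' B' (T 3 A B f) i j n" using e' e that by (auto intro: T_cong)
    also have "\<dots> = trans_G (mm 3 A A') (mm 3 B' B) f i j n" by (simp add: T_comp trans_G_T)
    finally show ?thesis .
  qed
  moreover have "ht i j n = trans_Gt (mm 3 A A') (mm 3 B' B) ft i j n" if "i<3" "j<3" "n<3" for i j n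
  proof -
    have "ht i j n = T 3 (\<lambda>k i. B' i k) (\<lambda>n m. A' m n) (T 3 (\<lambda>k i. B i k) (\<lambda>n m. A m n) ft) i j n"
      using e' e that by (auto intro: T_cong)
    also have "\<dots> = trans_Gt (mm 3 A A') (mm 3 B' B) ft i j n"
      by (simp add: T_comp trans_Gt_T mm_fun mult.commute)
    finally show ?thesis .
  qed
  ultimately show ?thesis using inv3_prod[OF inv] by (simp add: miso_def)
qed



lemma lie_cong:
  assumes "\<forall>i<n. \<forall>j<n. \<forall>k<n. c' i j k = c i j k" "lie_sc n c"
  shows "lie_sc n c'"
proof -
  have e: "c' i j k = c i j k" if "i<n" "j<n" "k<n" for i j k using assms(1) that by blast
  have sc: "(\<Sum>l<n. c' i j l * c' l k m + c' j k l * c' l i m + c' k i l * c' l j m) =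
        (\<Sum>l<n. c i j l * c l k m + c j k l * c l i m + c k i l * c l j m)"
    if "i<n" "j<n" "k<n" "m<n" for i j k m
    using that by (intro sum.cong) (auto simp: e)
  show ?thesis unfolding lie_sc_def
  proof (intro conjI allI impI)
    fix i j k assume h: "i<n" "j<n" "k<n"
    have "c i j k = - c j i k" using assms(2) h unfolding lie_sc_def by blast
    then show "c' i j k = - c' j i k" using h by (simp add: e)
  next
    fix i j k m assume h: "i<n" "j<n" "k<n" "m<n"
    have "(\<Sum>l<n. c i j l * c l k m + c j k l * c l i m + c k i l * c l j m) = 0"
      using assms(2) h unfolding lie_sc_def by blast
    then show "(\<Sum>l<n. c' i j l * c' l k m + c' j k l * c' l i m + c' k i l * c' l j m) = 0"
      using sc[OF h] by simp
  qed
qed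

lemma double_cong:
  assumes "\<forall>i<3. \<forall>j<3. \<forall>k<3. f' i j k = f i j k" "\<forall>i<3. \<forall>j<3. \<forall>k<3. ft' i j k = ft i j k"
    "i<6" "j<6" "m<6"
  shows "double_sc f' ft' i j m = double_sc f ft i j m"
  using split6[OF assms(3)] split6[OF assms(4)] split6[OF assms(5)] assms(1,2)
  by (elim disjE exE conjE; simp add: double_sc_def)

lemma block_inv:
  assumes "inv3 A B"
  shows "\<forall>a<6. \<forall>p<6. (\<Sum>l<6. Pb A B a l * Qb A B l p) = (if a = p then 1 else 0)"
proof (intro allI impI)
  fix a p :: nat assume "a<6" "p<6"
  have h1: "A i 0 * B 0 j + A i (Suc 0) * B (Suc 0) j + A i 2 * B 2 j = (if i = j then 1 else 0)" if "i<3" "j<3" for i j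
    using assms that unfolding inv3_def by (simp add: sum3)
  show "(\<Sum>l<6. Pb A B a l * Qb A B l p) = (if a = p then 1 else 0)"
    using split6[OF \<open>a<6\<close>] split6[OF \<open>p<6\<close>]
    by (elim disjE exE conjE; simp add: sum6 Pb_def Qb_def h1 mult.commute)
qed

lemma transport:
  assumes inv: "inv3 A B" and lie: "lie_sc 6 (double_sc f' ft')"
    and e: "\<forall>i<3. \<forall>j<3. \<forall>n<3. f i j n = trans_G A B f' i j n"
  shows "lie_sc 6 (double_sc f (trans_Gt A B ft'))"
proof -
  have L: "lie_sc 6 (T 6 (Pb A B) (Qb A B) (double_sc f' ft'))"
    by (rule lie_T[OF lie block_inv[OF inv]])
  show ?thesis
  proof (rule lie_cong[OF _ L], intro allI impI)
    fix i j k :: nat assume h: "i<6" "j<6" "k<6"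
    have "double_sc f (trans_Gt A B ft') i j k = double_sc (trans_G A B f') (trans_Gt A B ft') i j k"
      using e h by (intro double_cong) auto
    also have "\<dots> = T 6 (Pb A B) (Qb A B) (double_sc f' ft') i j k" using h by (rule L2)
    finally show "double_sc f (trans_Gt A B ft') i j k = T 6 (Pb A B) (Qb A B) (double_sc f' ft') i j k" .
  qed
qed

lemma hom_form:
  assumes inv: "\<forall>a<n. \<forall>p<n. (\<Sum>l<n. P a l * Q l p) = (if a = p then 1 else 0)" and "p<n"
  shows "(\<Sum>m<n. P p m * T n P Q c i j m) = (\<Sum>k<n. \<Sum>l<n. P k i * P l j * c k l p)"
  using claimA[OF inv \<open>p<n\<close>, of c i j] by (simp add: beta_def mult.commute)



definition F :: "real \<Rightarrow> real \<Rightarrow> real \<Rightarrow> sc" where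
  "F a p1 s = sc_of (vec3 0 s (-a*s)) (vec3 p1 0 0) (vec3 0 (-a*s) (-s))"

definition G :: "real \<Rightarrow> real \<Rightarrow> real \<Rightarrow> real \<Rightarrow> real \<Rightarrow> sc" where
  "G a p1 q1 r1 s = sc_of (vec3 r1 s (-a*s))
     (vec3 p1 (((a^2-1)*q1 - 2*a*r1)/(1+a^2)) ((2*a*q1 + (a^2-1)*r1)/(1+a^2)))
     (vec3 q1 (-a*s) (-s))"

lemma lie_antisym:
  assumes "lie_sc 6 (double_sc f g)" "i<3" "j<3" "k<3"
  shows "g i j k = - g j i k"
proof -
  have A: "\<forall>i<6. \<forall>j<6. \<forall>k<6. double_sc f g i j k = - double_sc f g j i k"
    using assms(1) unfolding lie_sc_def by blast
  have "double_sc f g (i+3) (j+3) (k+3) = - double_sc f g (j+3) (i+3) (k+3)"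
    using assms(2-4) by (intro A[rule_format]) auto
  then show ?thesis by (simp add: double_sc_def)
qed

lemma to_sc_of:
  assumes "\<forall>i<3. \<forall>j<3. \<forall>k<3. g i j k = - g j i k"
  shows "\<forall>i<3. \<forall>j<3. \<forall>k<3. g i j k = sc_of (vec3 (g 0 1 0) (g 0 1 1) (g 0 1 2))
      (vec3 (g 1 2 0) (g 1 2 1) (g 1 2 2)) (vec3 (g 2 0 0) (g 2 0 1) (g 2 0 2)) i j k"
proof (intro allI impI)
  fix i j k :: nat assume h: "i<3" "j<3" "k<3"
  have c3: "x < 3 \<Longrightarrow> x = 0 \<or> x = 1 \<or> x = (2::nat)" for x by auto
  have a: "g i j k = - g j i k" if "i<3" "j<3" "k<3" for i j k using assms that by blast
  have z: "g i i k = 0" if "i<3" "k<3" for i k using a[of i i k] that by simp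
  show "g i j k = sc_of (vec3 (g 0 1 0) (g 0 1 1) (g 0 1 2))
      (vec3 (g 1 2 0) (g 1 2 1) (g 1 2 2)) (vec3 (g 2 0 0) (g 2 0 1) (g 2 0 2)) i j k"
    using c3[OF h(1)] c3[OF h(2)] c3[OF h(3)]
    by (elim disjE; simp add: sc_of_def vec3_def z a[of "Suc 0" 0] a[of 2 "Suc 0"] a[of 0 2])
qed

lemma extract9:
  assumes "lie_sc 6 (double_sc (bianchi7 a) (sc_of (vec3 r1 r2 r3) (vec3 p1 p2 p3) (vec3 q1 q2 q3)))"
  shows "r3 = q3 * a \<and> - r2 = q3 \<and> r1 + p3 - a * q1 + a * p2 = 0 \<and> q1 + p2 + a * r1 = a * p3 \<and> q2 = q3 * a
     \<and> r2 * p1 - p2 * r1 + (p3 * q1 - q3 * p1) = 0"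
proof -
  let ?g = "sc_of (vec3 r1 r2 r3) (vec3 p1 p2 p3) (vec3 q1 q2 q3)"
  have J: "\<And>i j k m. i<6 \<Longrightarrow> j<6 \<Longrightarrow> k<6 \<Longrightarrow> m<6 \<Longrightarrow> (\<Sum>l<6. double_sc (bianchi7 a) ?g i j l * double_sc (bianchi7 a) ?g l k m + double_sc (bianchi7 a) ?g j k l * double_sc (bianchi7 a) ?g l i m + double_sc (bianchi7 a) ?g k i l * double_sc (bianchi7 a) ?g l j m) = 0"
    using assms unfolding lie_sc_def by blast
  show ?thesis
    using J[of 0 1 3 0] J[of 0 1 3 1] J[of 0 1 3 2] J[of 0 1 4 0] J[of 0 1 4 1] J[of 0 1 4 2] J[of 0 1 5 0] J[of 0 1 5 1] J[of 0 1 5 2]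
      J[of 0 2 3 0] J[of 0 2 3 1] J[of 0 2 3 2] J[of 0 2 4 0] J[of 0 2 4 1] J[of 0 2 4 2] J[of 0 2 5 0] J[of 0 2 5 1] J[of 0 2 5 2]
      J[of 1 2 3 0] J[of 1 2 3 1] J[of 1 2 3 2] J[of 1 2 4 0] J[of 1 2 4 1] J[of 1 2 4 2] J[of 1 2 5 0] J[of 1 2 5 1] J[of 1 2 5 2]
      J[of 3 4 5 3] J[of 3 4 5 4] J[of 3 4 5 5]
    by (simp add: sum6 double_sc_def bianchi7_def sc_of_def vec3_def)
qed

lemma solve9:
  fixes a :: real
  assumes "a > 0" and e: "r3 = q3 * a \<and> - r2 = q3 \<and> r1 + p3 - a * q1 + a * p2 = 0 \<and> q1 + p2 + a * r1 = a * p3 \<and> q2 = q3 * a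
     \<and> r2 * p1 - p2 * r1 + (p3 * q1 - q3 * p1) = 0"
  shows "sc_of (vec3 r1 r2 r3) (vec3 p1 p2 p3) (vec3 q1 q2 q3) = G a p1 q1 r1 r2
     \<and> r2 * p1 * (1 + a^2) + a * (q1^2 + r1^2) = 0"
proof -
  have k: "1 + a^2 \<noteq> 0" by (metis add_pos_nonneg zero_less_one zero_le_power2 less_irrefl)
  have p3: "p3 = a * q1 - a * p2 - r1" using e by (simp add: algebra_simps)
  have p2k: "p2 * (1 + a^2) = (a^2-1)*q1 - 2*a*r1"
    using e unfolding p3 by (simp add: algebra_simps power2_eq_square)
  have p2: "p2 = ((a^2-1)*q1 - 2*a*r1)/(1+a^2)" using p2k k by (simp add: field_simps)
  have p3': "p3 = (2*a*q1 + (a^2-1)*r1)/(1+a^2)" unfolding p3 p2 using k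
    by (simp add: field_simps) (simp add: algebra_simps power2_eq_square)
  have q3: "q3 = - r2" using e by simp
  have id: "(1+a^2) * (r2 * p1 - p2 * r1 + (p3 * q1 - q3 * p1)) = r2 * p1 * (1 + a^2) * 2 + a * (q1^2 + r1^2) * 2
      + (r1 + a * q1) * ((a^2-1)*q1 - 2*a*r1 - p2 * (1 + a^2))"
    unfolding p3 q3 by (simp add: algebra_simps power2_eq_square)
  have "r2 * p1 * (1 + a^2) * 2 + a * (q1^2 + r1^2) * 2 = (1+a^2) * (r2 * p1 - p2 * r1 + (p3 * q1 - q3 * p1))"
    unfolding id p2k by simp
  then have "r2 * p1 * (1 + a^2) + a * (q1^2 + r1^2) = 0" using e by simp
  moreover have "sc_of (vec3 r1 r2 r3) (vec3 p1 p2 p3) (vec3 q1 q2 q3) = G a p1 q1 r1 r2"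
  proof -
    have r3: "r3 = -a*r2" and q2: "q2 = -a*r2" using e by auto
    show ?thesis unfolding G_def p2 p3' q3 r3 q2 by simp
  qed
  ultimately show ?thesis by simp
qed



lemma aut_eqs:
  fixes a :: real
  assumes H: "\<forall>i<3. \<forall>j<3. \<forall>p<3. (\<Sum>m<3. C p m * bianchi7 a i j m) = (\<Sum>k<3. \<Sum>l<3. C k i * C l j * bianchi7 a k l p)"
  shows "C 0 2 = a * C 0 1 \<and> - C 0 1 = a * C 0 2
    \<and> C 1 2 - a * C 1 1 = - a * C 0 0 * C 1 1 - C 0 0 * C 2 1 + a * C 1 0 * C 0 1 + C 2 0 * C 0 1
    \<and> C 2 2 - a * C 2 1 = C 0 0 * C 1 1 - a * C 0 0 * C 2 1 - C 1 0 * C 0 1 + a * C 2 0 * C 0 1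
    \<and> - C 1 1 - a * C 1 2 = - a * C 0 0 * C 1 2 - C 0 0 * C 2 2 + a * C 1 0 * C 0 2 + C 2 0 * C 0 2
    \<and> - C 2 1 - a * C 2 2 = C 0 0 * C 1 2 - a * C 0 0 * C 2 2 - C 1 0 * C 0 2 + a * C 2 0 * C 0 2"
proof -
  have h: "\<And>i j p. i<3 \<Longrightarrow> j<3 \<Longrightarrow> p<3 \<Longrightarrow> (\<Sum>m<3. C p m * bianchi7 a i j m) = (\<Sum>k<3. \<Sum>l<3. C k i * C l j * bianchi7 a k l p)"
    using H by blast
  show ?thesis
    using h[of 0 1 0] h[of 0 2 0] h[of 0 1 1] h[of 0 1 2] h[of 0 2 1] h[of 0 2 2]
    apply (simp add: sum3 bianchi7_def sc_of_def vec3_def)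
    apply (intro conjI; algebra)
    done
qed


lemma inv3_N:
  assumes "inv3 C D" "C 0 1 = 0" "C 0 2 = 0"
  shows "\<not> (C 1 1 = 0 \<and> C 1 2 = 0 \<and> C 2 1 = 0 \<and> C 2 2 = 0)"
proof
  assume z: "C 1 1 = 0 \<and> C 1 2 = 0 \<and> C 2 1 = 0 \<and> C 2 2 = 0"
  have "(\<Sum>k<3. C 1 k * D k 1) = 1" "(\<Sum>k<3. C 2 k * D k 2) = 1" "(\<Sum>k<3. C 1 k * D k 2) = 0"
    using assms(1) unfolding inv3_def by auto
  then have "C 1 0 * D 0 1 = 1" "C 2 0 * D 0 2 = 1" "C 1 0 * D 0 2 = 0"
    using z by (simp_all add: sum3)
  then show False by (metis mult_eq_0_iff mult_zero_right zero_neq_one)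
qed

lemma aut_form:
  fixes a :: real
  assumes "a > 0" "inv3 C D"
    and H: "\<forall>i<3. \<forall>j<3. \<forall>p<3. (\<Sum>m<3. C p m * bianchi7 a i j m) = (\<Sum>k<3. \<Sum>l<3. C k i * C l j * bianchi7 a k l p)"
  shows "C 0 0 = 1 \<and> C 0 1 = 0 \<and> C 0 2 = 0 \<and> C 2 2 = C 1 1 \<and> C 2 1 = - C 1 2 \<and> (C 1 1)^2 + (C 1 2)^2 > 0"
proof -
  note E = aut_eqs[OF H]
  have k: "1 + a^2 > 0" by (simp add: add_pos_nonneg)
  have "C 0 1 * (1 + a^2) = 0" using E by algebra
  then have c01: "C 0 1 = 0" using k by simp
  then have c02: "C 0 2 = 0" using E by simp
  define l where "l = C 0 0"
  define u where "u = C 1 1 + C 2 2"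
  define v where "v = C 1 2 - C 2 1"
  define u' where "u' = C 1 1 - C 2 2"
  define v' where "v' = C 1 2 + C 2 1"
  define \<mu> where "\<mu> = a * (l - 1)"
  have Ea: "C 1 2 - a * C 1 1 + a * l * C 1 1 + l * C 2 1 = 0" using E c01 c02 unfolding l_def by algebra
  have Eb: "C 2 2 - a * C 2 1 - l * C 1 1 + a * l * C 2 1 = 0" using E c01 c02 unfolding l_def by algebra
  have Ec: "- C 1 1 - a * C 1 2 + a * l * C 1 2 + l * C 2 2 = 0" using E c01 c02 unfolding l_def by algebra
  have Ed: "- C 2 1 - a * C 2 2 - l * C 1 2 + a * l * C 2 2 = 0" using E c01 c02 unfolding l_def by algebra
  have F1: "((1-l)^2 + \<mu>^2) * u = 0" "((1-l)^2 + \<mu>^2) * v = 0"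
    "((1+l)^2 + \<mu>^2) * u' = 0" "((1+l)^2 + \<mu>^2) * v' = 0"
    using Ea Eb Ec Ed unfolding u_def v_def u'_def v'_def \<mu>_def by algebra+
  have l1: "l = 1"
  proof (rule ccontr)
    assume "l \<noteq> 1"
    then have p1: "(1-l)^2 + \<mu>^2 > 0" by (simp add: add_pos_nonneg)
    have p2: "(1+l)^2 + \<mu>^2 > 0"
    proof (cases "l = -1")
      case True then show ?thesis using \<open>a>0\<close> by (simp add: \<mu>_def)
    next
      case False then have "(1+l)^2 > 0" by simp
      then show ?thesis by (simp add: add_pos_nonneg)
    qed
    have "u = 0" "v = 0" "u' = 0" "v' = 0" using F1 p1 p2 by (metis mult_eq_0_iff less_irrefl)+
    then have "C 1 1 = 0 \<and> C 1 2 = 0 \<and> C 2 1 = 0 \<and> C 2 2 = 0"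
      unfolding u_def v_def u'_def v'_def by linarith
    then show False using inv3_N[OF assms(2) c01 c02] by blast
  qed
  then have "\<mu> = 0" by (simp add: \<mu>_def)
  then have "u' = 0" "v' = 0" using F1 l1 by simp_all
  then have c22: "C 2 2 = C 1 1" and c21: "C 2 1 = - C 1 2" unfolding u'_def v'_def by linarith+
  have "(C 1 1)^2 + (C 1 2)^2 > 0"
  proof (rule ccontr)
    assume "\<not> ?thesis"
    then have "C 1 1 = 0" "C 1 2 = 0" by (smt (verit) zero_le_power2 power2_less_eq_zero_iff)+
    then show False using inv3_N[OF assms(2) c01 c02] c22 c21 by simp
  qed
  then show ?thesis using l1 c01 c02 c22 c21 unfolding l_def by simp
qed



definition mat3 :: "real \<Rightarrow> real \<Rightarrow> real \<Rightarrow> real \<Rightarrow> real \<Rightarrow> real \<Rightarrow> real \<Rightarrow> real \<Rightarrow> real \<Rightarrow> nat \<Rightarrow> nat \<Rightarrow> real" where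
  "mat3 c00 c01 c02 c10 c11 c12 c20 c21 c22 i j = vec3 (vec3 c00 c01 c02 j) (vec3 c10 c11 c12 j) (vec3 c20 c21 c22 j) i"

definition Gv :: "real \<Rightarrow> real \<Rightarrow> real \<Rightarrow> real \<Rightarrow> sc" where
  "Gv a s v2 v3 = sc_of (vec3 (s*(a*v3-v2)) s (-a*s)) (vec3 (-a*s*(v2^2+v3^2)) (s*(a*v2-v3)) (s*(v2+a*v3)))
     (vec3 (s*(a*v2+v3)) (-a*s) (-s))"

lemma all3: "(\<forall>i<(3::nat). P i) \<longleftrightarrow> P 0 \<and> P 1 \<and> P 2"
  unfolding numeral_3_eq_3 numeral_2_eq_2 by (auto simp: less_Suc_eq)

lemma translation:
  "miso (mat3 1 0 0 v2 1 0 v3 0 1) (mat3 1 0 0 (-v2) 1 0 (-v3) 0 1) (bianchi7 a) (Gv a s v2 v3) (bianchi7 a) (F a 0 s)"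
  unfolding miso_def inv3_def all3
  by (simp add: sum3 mat3_def vec3_def trans_G_def trans_Gt_def bianchi7_def sc_of_def Gv_def F_def algebra_simps power2_eq_square)


lemma scaling:
  assumes "l > 0"
  shows "miso (mat3 1 0 0 0 l 0 0 0 l) (mat3 1 0 0 0 (1/l) 0 0 0 (1/l)) (bianchi7 a) (F a p1 0) (bianchi7 a) (F a (p1/l^2) 0)"
  unfolding miso_def inv3_def all3
  using assms by (simp add: sum3 mat3_def vec3_def trans_G_def trans_Gt_def bianchi7_def sc_of_def F_def field_simps power2_eq_square)

lemma G_Gv:
  fixes a :: real
  assumes "a > 0" "s \<noteq> 0" and c: "s * p1 * (1 + a^2) + a * (q1^2 + r1^2) = 0"
  shows "G a p1 q1 r1 s = Gv a s ((a*q1 - r1)/(s*(1+a^2))) ((a*r1 + q1)/(s*(1+a^2)))"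
proof -
  have k: "1 + a^2 \<noteq> 0" by (metis add_pos_nonneg zero_less_one zero_le_power2 less_irrefl)
  define K where "K = s * (1 + a^2)"
  have sk: "K \<noteq> 0" using k assms(2) by (simp add: K_def)
  have p1k: "p1 * K = - a * (q1^2 + r1^2)" using c unfolding K_def by algebra
  have p1: "p1 = - a * (q1^2 + r1^2) / K"
  proof -
    have "p1 = (p1 * K) / K" using sk by simp
    then show ?thesis by (simp only: p1k)
  qed
  define v2 where "v2 = (a*q1 - r1)/K"
  define v3 where "v3 = (a*r1 + q1)/K"
  have e1: "s*(a*v3-v2) = r1" unfolding v2_def v3_def using sk
    apply (simp add: field_simps) apply (unfold K_def) by algebra
  have e2: "s*(a*v2+v3) = q1" unfolding v2_def v3_def using sk
    apply (simp add: field_simps) apply (unfold K_def) by algebra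
  have e3: "-a*s*(v2^2+v3^2) = p1" unfolding v2_def v3_def p1 using sk
    apply (simp add: field_simps) apply (unfold K_def) by algebra
  have e4: "s*(a*v2-v3) = ((a^2-1)*q1 - 2*a*r1)/(1+a^2)" unfolding v2_def v3_def using sk k
    apply (simp add: field_simps) apply (unfold K_def) by algebra
  have e5: "s*(v2+a*v3) = (2*a*q1 + (a^2-1)*r1)/(1+a^2)" unfolding v2_def v3_def using sk k
    apply (simp add: field_simps) apply (unfold K_def) by algebra
  show ?thesis unfolding G_def Gv_def K_def[symmetric] v2_def[symmetric] v3_def[symmetric] e1 e2 e3 e4 e5 by simp
qed

lemma dual_inv:
  fixes a :: real
  assumes "a > 0" and C: "C 0 0 = 1 \<and> C 0 1 = 0 \<and> C 0 2 = 0 \<and> C 2 2 = C 1 1 \<and> C 2 1 = - C 1 2 \<and> (C 1 1)^2 + (C 1 2)^2 > 0"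
    and HD: "\<forall>i<3. \<forall>j<3. \<forall>p<3. (\<Sum>m<3. C m p * F a p1 s i j m) = (\<Sum>k<3. \<Sum>l<3. C i k * C j l * F a p1' s' k l p)"
  shows "s = s' \<and> p1 = ((C 1 1)^2 + (C 1 2)^2) * p1'"
proof -
  have h: "\<And>i j p. i<3 \<Longrightarrow> j<3 \<Longrightarrow> p<3 \<Longrightarrow> (\<Sum>m<3. C m p * F a p1 s i j m) = (\<Sum>k<3. \<Sum>l<3. C i k * C j l * F a p1' s' k l p)"
    using HD by blast
  have c: "C 0 0 = 1" "C 0 (Suc 0) = 0" "C 0 2 = 0" "C 2 2 = C (Suc 0) (Suc 0)" "C 2 (Suc 0) = - C (Suc 0) 2"
    using C by auto
  define p where "p = C 1 1"
  define q where "q = C 1 2"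
  have pq: "p^2 + q^2 > 0" using C by (simp add: p_def q_def)
  have R: "C 1 1 * s + C 1 2 * (a * s) = C 1 1 * s' + C 1 2 * (a * s')"
     "C 1 2 * s - C 1 1 * (a * s) = C 1 2 * s' - C 1 1 * (a * s')"
     "p1 = C 1 1 * C 1 1 * p1' + C 1 2 * C 1 2 * p1'"
    using h[of 0 1 0] h[of 0 1 1] h[of 0 1 2] h[of 0 2 0] h[of 0 2 1] h[of 0 2 2] h[of 1 2 0] h[of 1 2 1] h[of 1 2 2]
    by (simp_all add: sum3 F_def sc_of_def vec3_def c)
  have E: "p1 = (p^2 + q^2) * p1'" "(p + a*q) * (s - s') = 0" "(q - a * p) * (s - s') = 0"
    using R unfolding p_def q_def by algebra+
  have Z: "((1 + a^2) * (p^2 + q^2)) * (s - s') = 0" using E by algebra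
  moreover have "(1 + a^2) * (p^2 + q^2) > 0" using pq by (simp add: add_pos_nonneg)
  ultimately have "s - s' = 0" by (metis less_irrefl mult_eq_0_iff)
  then have "s = s'" by simp
  then show ?thesis using E by (simp add: p_def q_def)
qed

lemma canon_F:
  fixes a :: real
  assumes "a > 0" "canonical_dual a ft"
  shows "\<exists>p1 s. ft = F a p1 s \<and> ((s = 0 \<and> (p1 = 0 \<or> p1 = 1 \<or> p1 = -1)) \<or> (s \<noteq> 0 \<and> p1 = 0))"
proof -
  have "ft = F a 0 0 \<or> ft = F a 1 0 \<or> ft = F a (-1) 0 \<or> (\<exists>b. b \<noteq> 0 \<and> ft = F a 0 (-(b/a)))"
    using assms unfolding canonical_dual_def F_def by simp
  then show ?thesis
  proof (elim disjE exE conjE)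
    fix b :: real assume "b \<noteq> 0" "ft = F a 0 (-(b/a))"
    then show ?thesis using assms(1) by (intro exI[of _ 0] exI[of _ "-(b/a)"]) simp
  qed auto
qed

lemma F_canon:
  fixes a :: real
  assumes "a > 0" "(s = 0 \<and> (p1 = 0 \<or> p1 = 1 \<or> p1 = -1)) \<or> (s \<noteq> 0 \<and> p1 = 0)"
  shows "canonical_dual a (F a p1 s)"
  using assms(2)
proof (elim disjE conjE)
  assume "s \<noteq> 0" "p1 = 0"
  then show ?thesis unfolding canonical_dual_def using assms(1)
    by (intro disjI2 exI[of _ "-a*s"]) (simp add: F_def)
qed (auto simp: canonical_dual_def F_def)



lemma miso_congL:
  assumes "miso A B f ft g gt" "\<forall>i<3. \<forall>j<3. \<forall>k<3. ft2 i j k = ft i j k"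
  shows "miso A B f ft2 g gt"
proof -
  have "trans_Gt A B ft2 i j n = trans_Gt A B ft i j n" for i j n
    unfolding trans_Gt_T using assms(2) by (intro T_cong) auto
  then show ?thesis using assms(1) by (simp add: miso_def)
qed

lemma aut_hom:
  assumes "miso C D f ft1 f ft2"
  shows "\<forall>i<3. \<forall>j<3. \<forall>p<3. (\<Sum>m<3. C p m * f i j m) = (\<Sum>k<3. \<Sum>l<3. C k i * C l j * f k l p)"
    and "\<forall>i<3. \<forall>j<3. \<forall>p<3. (\<Sum>m<3. C m p * ft1 i j m) = (\<Sum>k<3. \<Sum>l<3. C i k * C j l * ft2 k l p)"
proof -
  have inv: "inv3 C D" and e: "\<forall>i<3. \<forall>j<3. \<forall>n<3. f i j n = trans_G C D f i j n"
    using assms by (auto simp: miso_def)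
  have e2: "\<forall>i<3. \<forall>j<3. \<forall>n<3. ft1 i j n = trans_Gt D C ft2 i j n"
    using miso_sym[OF assms] by (auto simp: miso_def)
  have I1: "\<forall>a<3. \<forall>p<3. (\<Sum>l<3. C a l * D l p) = (if a = p then 1 else 0)"
    using inv by (simp add: inv3_def)
  have I2: "\<forall>a<3. \<forall>p<3. (\<Sum>l<3. (\<lambda>k i. C i k) a l * (\<lambda>n m. D m n) l p) = (if a = p then 1 else 0)"
    using inv by (simp add: inv3_def mult.commute)
  show "\<forall>i<3. \<forall>j<3. \<forall>p<3. (\<Sum>m<3. C p m * f i j m) = (\<Sum>k<3. \<Sum>l<3. C k i * C l j * f k l p)"
  proof (intro allI impI)
    fix i j p :: nat assume h: "i<3" "j<3" "p<3"
    have "(\<Sum>m<3. C p m * f i j m) = (\<Sum>m<3. C p m * T 3 C D f i j m)"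
      using e h by (intro sum.cong) (auto simp: trans_G_T)
    also have "\<dots> = (\<Sum>k<3. \<Sum>l<3. C k i * C l j * f k l p)" by (rule hom_form[OF I1 h(3)])
    finally show "(\<Sum>m<3. C p m * f i j m) = (\<Sum>k<3. \<Sum>l<3. C k i * C l j * f k l p)" .
  qed
  show "\<forall>i<3. \<forall>j<3. \<forall>p<3. (\<Sum>m<3. C m p * ft1 i j m) = (\<Sum>k<3. \<Sum>l<3. C i k * C j l * ft2 k l p)"
  proof (intro allI impI)
    fix i j p :: nat assume h: "i<3" "j<3" "p<3"
    have "(\<Sum>m<3. C m p * ft1 i j m) = (\<Sum>m<3. (\<lambda>k i. C i k) p m * T 3 (\<lambda>k i. C i k) (\<lambda>n m. D m n) ft2 i j m)"
      using e2 h by (intro sum.cong) (auto simp: trans_Gt_T)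
    also have "\<dots> = (\<Sum>k<3. \<Sum>l<3. (\<lambda>k i. C i k) k i * (\<lambda>k i. C i k) l j * ft2 k l p)"
      by (rule hom_form[OF I2 h(3)])
    finally show "(\<Sum>m<3. C m p * ft1 i j m) = (\<Sum>k<3. \<Sum>l<3. C i k * C j l * ft2 k l p)" by simp
  qed
qed

lemma uniq:
  fixes a :: real
  assumes "a > 0" "canonical_dual a ft1" "canonical_dual a ft2"
    "manin_iso (bianchi7 a) ft1 f' ft'" "manin_iso (bianchi7 a) ft2 f' ft'"
  shows "ft1 = ft2"
proof -
  obtain X1 Y1 where m1: "miso X1 Y1 (bianchi7 a) ft1 f' ft'" using assms(4) by (auto simp: manin_iso_miso)
  obtain X2 Y2 where m2: "miso X2 Y2 (bianchi7 a) ft2 f' ft'" using assms(5) by (auto simp: manin_iso_miso)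
  define C where "C = mm 3 X1 Y2"
  define D where "D = mm 3 X2 Y1"
  have m: "miso C D (bianchi7 a) ft1 (bianchi7 a) ft2"
    unfolding C_def D_def by (rule miso_trans[OF m1 miso_sym[OF m2]])
  obtain p1 s where F1: "ft1 = F a p1 s" and c1: "(s = 0 \<and> (p1 = 0 \<or> p1 = 1 \<or> p1 = -1)) \<or> (s \<noteq> 0 \<and> p1 = 0)"
    using canon_F[OF assms(1,2)] by blast
  obtain p1' s' where F2: "ft2 = F a p1' s'" and c2: "(s' = 0 \<and> (p1' = 0 \<or> p1' = 1 \<or> p1' = -1)) \<or> (s' \<noteq> 0 \<and> p1' = 0)"
    using canon_F[OF assms(1,3)] by blast
  have inv: "inv3 C D" using m by (simp add: miso_def)
  have Cf: "C 0 0 = 1 \<and> C 0 1 = 0 \<and> C 0 2 = 0 \<and> C 2 2 = C 1 1 \<and> C 2 1 = - C 1 2 \<and> (C 1 1)^2 + (C 1 2)^2 > 0"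
    by (rule aut_form[OF assms(1) inv aut_hom(1)[OF m]])
  have D: "s = s' \<and> p1 = ((C 1 1)^2 + (C 1 2)^2) * p1'"
    by (rule dual_inv[OF assms(1) Cf aut_hom(2)[OF m, unfolded F1 F2]])
  define t where "t = (C 1 1)^2 + (C 1 2)^2"
  have t: "t > 0" using Cf by (simp add: t_def)
  have Dt: "s = s'" "p1 = t * p1'" using D unfolding t_def by auto
  have "p1 = p1'"
  proof (cases "s = 0")
    case False
    then show ?thesis using c1 c2 Dt by auto
  next
    case True
    then have "p1' = 0 \<or> p1' = 1 \<or> p1' = -1" "p1 = 0 \<or> p1 = 1 \<or> p1 = -1" using c1 c2 Dt by auto
    then show ?thesis using Dt(2) t by (elim disjE) auto
  qed
  then show ?thesis using Dt(1) F1 F2 by simp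
qed



lemma exist:
  fixes a :: real and f' ft' :: sc
  assumes "a > 0" and man: "manin f' ft'" and iso: "lie_iso3 (bianchi7 a) f'"
  shows "\<exists>ft. canonical_dual a ft \<and> manin_iso (bianchi7 a) ft f' ft'"
proof -
  let ?f = "bianchi7 a"
  obtain A B where inv: "inv3 A B" and e: "\<forall>i<3. \<forall>j<3. \<forall>n<3. f' i j n = trans_G A B ?f i j n"
    using iso unfolding lie_iso3_def by blast
  define ft0 where "ft0 = trans_Gt B A ft'"
  have inv': "inv3 B A" using inv by (rule inv3_sym)
  have eb: "\<forall>i<3. \<forall>j<3. \<forall>n<3. ?f i j n = trans_G B A f' i j n"
  proof (intro allI impI)
    fix i j n :: nat assume h: "i<3" "j<3" "n<3"
    have "trans_G B A f' i j n = T 3 B A (T 3 A B ?f) i j n"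
      unfolding trans_G_T using e by (intro T_cong) (auto simp: trans_G_T)
    also have "\<dots> = ?f i j n" using T_undo[OF inv h] .
    finally show "?f i j n = trans_G B A f' i j n" by simp
  qed
  have m0: "miso A B ?f ft0 f' ft'"
  proof -
    have "miso B A f' ft' ?f ft0" using inv' eb by (simp add: miso_def ft0_def)
    then show ?thesis using miso_sym by fastforce
  qed
  have lie0: "lie_sc 6 (double_sc ?f ft0)"
    unfolding ft0_def by (rule transport[OF inv' _ eb]) (use man in \<open>simp add: manin_def\<close>)
  have anti: "\<forall>i<3. \<forall>j<3. \<forall>k<3. ft0 i j k = - ft0 j i k"
    using lie_antisym[OF lie0] by blast
  define g where "g = sc_of (vec3 (ft0 0 1 0) (ft0 0 1 1) (ft0 0 1 2))
      (vec3 (ft0 1 2 0) (ft0 1 2 1) (ft0 1 2 2)) (vec3 (ft0 2 0 0) (ft0 2 0 1) (ft0 2 0 2))"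
  have eg': "\<forall>i<3. \<forall>j<3. \<forall>k<3. ft0 i j k = g i j k"
    unfolding g_def by (rule to_sc_of[OF anti])
  have eg: "\<forall>i<3. \<forall>j<3. \<forall>k<3. g i j k = ft0 i j k"
    using eg' by simp
  have lieg: "lie_sc 6 (double_sc ?f g)"
    by (rule lie_cong[OF _ lie0]) (auto intro: double_cong simp: eg)
  note S = solve9[OF assms(1) extract9[OF lieg[unfolded g_def]]]
  define p1 where "p1 = ft0 1 2 0"
  define q1 where "q1 = ft0 2 0 0"
  define r1 where "r1 = ft0 0 1 0"
  define s where "s = ft0 0 1 1"
  have gG: "g = G a p1 q1 r1 s" and con: "s * p1 * (1 + a^2) + a * (q1^2 + r1^2) = 0"
    using S unfolding g_def p1_def q1_def r1_def s_def by auto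
  have mG: "miso A B ?f (G a p1 q1 r1 s) f' ft'"
    using miso_congL[OF m0] eg unfolding gG by simp
  show ?thesis
  proof (cases "s = 0")
    case False
    define v2 where "v2 = (a*q1 - r1)/(s*(1+a^2))"
    define v3 where "v3 = (a*r1 + q1)/(s*(1+a^2))"
    have "G a p1 q1 r1 s = Gv a s v2 v3" unfolding v2_def v3_def by (rule G_Gv[OF assms(1) False con])
    then have m1: "miso A B ?f (Gv a s v2 v3) f' ft'" using mG by simp
    have m2: "miso (mat3 1 0 0 (-v2) 1 0 (-v3) 0 1) (mat3 1 0 0 v2 1 0 v3 0 1) ?f (F a 0 s) ?f (Gv a s v2 v3)"
      by (rule miso_sym[OF translation])
    have "manin_iso ?f (F a 0 s) f' ft'" unfolding manin_iso_miso using miso_trans[OF m2 m1] by blast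
    moreover have "canonical_dual a (F a 0 s)" using F_canon[OF assms(1)] False by simp
    ultimately show ?thesis by blast
  next
    case True
    then have "a * (q1^2 + r1^2) = 0" using con by simp
    then have "q1^2 + r1^2 = 0" using assms(1) by simp
    then have q0: "q1 = 0" "r1 = 0" by (simp_all add: sum_power2_eq_zero_iff)
    have GF: "G a p1 q1 r1 s = F a p1 0" unfolding G_def F_def q0 True by simp
    have mF: "miso A B ?f (F a p1 0) f' ft'" using mG unfolding GF .
    show ?thesis
    proof (cases "p1 = 0")
      case True
      then show ?thesis using mF F_canon[OF assms(1), of 0 0] unfolding manin_iso_miso by blast
    next
      case False
      define l where "l = sqrt \<bar>p1\<bar>"
      have l: "l > 0" using False by (simp add: l_def)
      have l2: "l^2 = \<bar>p1\<bar>" by (simp add: l_def)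
      have m2: "miso (mat3 1 0 0 0 (1/l) 0 0 0 (1/(l))) (mat3 1 0 0 0 l 0 0 0 l) ?f (F a (p1/l^2) 0) ?f (F a p1 0)"
        by (rule miso_sym[OF scaling[OF l]])
      have "manin_iso ?f (F a (p1/l^2) 0) f' ft'" unfolding manin_iso_miso using miso_trans[OF m2 mF] by blast
      moreover have "p1/l^2 = 1 \<or> p1/l^2 = -1" unfolding l2 using False by (cases "p1 > 0") auto
      then have "canonical_dual a (F a (p1/l^2) 0)" using F_canon[OF assms(1)] by blast
      ultimately show ?thesis by blast
    qed
  qed
qed

theorem mainTheorem3:
  fixes a :: real and f' ft' :: sc
  assumes "a > 0"
    and "manin f' ft'"
    and "lie_iso3 (bianchi7 a) f'"
  shows "\<exists>!ft. canonical_dual a ft \<and> manin_iso (bianchi7 a) ft f' ft'"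
proof -
  obtain ft where "canonical_dual a ft \<and> manin_iso (bianchi7 a) ft f' ft'"
    using exist[OF assms] by blast
  then show ?thesis
    using uniq[OF assms(1)] by (intro ex1I[of _ ft]) blast+
qed

end
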